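(* Let $A$ and $B$ be real $n\times n$ matrices, and suppose there exists a real $n\times n$ matrix $X$ such that $AB-BA\geq I-X$ (entrywise). Then: (i) $\operatorname{tr}(X)\geq n$; (ii) $r(X)\geq1$, and consequently $\|X\|\geq1$ for the operator norm induced by any norm on $\mathbb R^n$; (iii) if $X$ is idempotent ($X^2=X$), then $X=I$.
   Context: Real $n\times n$ matrices are ordered entrywise: $X\leq Y$ means $x_{ij}\leq y_{ij}$ for all $i,j$. $I$ is the $n\times n$ identity matrix, $\operatorname{tr}$ the trace, and $r(X)$ the spectral radius of $X$ (maximum modulus of its complex eigenvalues). *)

theory Defs
  imports "Jordan_Normal_Form.Spectral_Radius"
begin

definition mat_le_entrywise :: "nat \<Rightarrow> real mat \<Rightarrow> real mat \<Rightarrow> bool" where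
  "mat_le_entrywise n X Y \<longleftrightarrow> (\<forall>i<n. \<forall>j<n. X $$ (i, j) \<le> Y $$ (i, j))"

definition mat_trace :: "real mat \<Rightarrow> real" where
  "mat_trace X = (\<Sum>i<dim_row X. X $$ (i, i))"

definition real_spectral_radius :: "real mat \<Rightarrow> real" where
  "real_spectral_radius X = spectral_radius (map_mat complex_of_real X)"

definition is_norm_on :: "nat \<Rightarrow> (real vec \<Rightarrow> real) \<Rightarrow> bool" where
  "is_norm_on n N \<longleftrightarrow>
     (\<forall>v\<in>carrier_vec n. N v \<ge> 0 \<and> (N v = 0 \<longleftrightarrow> v = 0\<^sub>v n)) \<and>
     (\<forall>v\<in>carrier_vec n. \<forall>c. N (c \<cdot>\<^sub>v v) = \<bar>c\<bar> * N v) \<and>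
     (\<forall>u\<in>carrier_vec n. \<forall>v\<in>carrier_vec n. N (u + v) \<le> N u + N v)"

definition induced_op_norm :: "nat \<Rightarrow> (real vec \<Rightarrow> real) \<Rightarrow> real mat \<Rightarrow> real" where
  "induced_op_norm n N X = (SUP v\<in>{v \<in> carrier_vec n. v \<noteq> 0\<^sub>v n}. N (X *\<^sub>v v) / N v)"

end

theory Submission imports Defs "Jordan_Normal_Form.Schur_Decomposition" begin

definition trm :: "'a::comm_ring_1 mat \<Rightarrow> 'a" where "trm M = (\<Sum>i<dim_row M. M $$ (i,i))"

lemma trm_comm: assumes "A \<in> carrier_mat n m" "B \<in> carrier_mat m n"
  shows "trm (A*B) = trm (B*A)"
  using assms unfolding trm_def
  by (simp add: scalar_prod_def atLeast0LessThan sum.swap[of _ "{..<n}"] mult.commute)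

lemma eig_info:
  fixes X :: "real mat"
  assumes X: "X \<in> carrier_mat n n"
  shows "\<exists>T \<in> carrier_mat n n.
     (\<forall>k. eigenvalue (map_mat complex_of_real X) k \<longleftrightarrow> (\<exists>i<n. T$$(i,i) = k))
   \<and> (\<Sum>i<n. T$$(i,i)) = complex_of_real (mat_trace X)"
proof -
  define C where "C = map_mat complex_of_real X"
  have C: "C \<in> carrier_mat n n" using X unfolding C_def by auto
  obtain as where as: "char_poly C = (\<Prod> a \<leftarrow> as. [:- a, 1:])"
    using char_poly_factorized[OF C] by blast
  define T where "T = schur_upper_triangular C as"
  have T: "T \<in> carrier_mat n n" "upper_triangular T" "similar_mat C T"
    using schur_upper_triangular[OF C as] unfolding T_def by auto
  have cp: "char_poly C = (\<Prod> a \<leftarrow> diag_mat T. [:- a, 1:])"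
    using char_poly_similar[OF T(3)] char_poly_upper_triangular[OF T(1,2)] by simp
  have ev: "eigenvalue C k \<longleftrightarrow> (\<exists>i<n. T$$(i,i) = k)" for k
    unfolding eigenvalue_root_char_poly[OF C] cp poly_prod_list_zero_iff
    using T(1) by (auto simp: diag_mat_def)
  from similar_matD[OF T(3)] obtain m P Q where
    PQ: "{C, T, P, Q} \<subseteq> carrier_mat m m" "P * Q = 1\<^sub>m m" "Q * P = 1\<^sub>m m" "C = P * T * Q" by auto
  have m: "m = n" using PQ(1) C by auto
  have P: "P \<in> carrier_mat n n" and Q: "Q \<in> carrier_mat n n" using PQ(1) m by auto
  have "trm C = trm (P * (T * Q))" using PQ(4) P Q T(1) by (simp add: assoc_mult_mat[of _ n n])
  also have "\<dots> = trm ((T * Q) * P)" by (rule trm_comm[OF P], insert T(1) Q, auto)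
  also have "(T * Q) * P = T" using PQ(3) m T(1) Q P by (simp add: assoc_mult_mat[of _ n n])
  finally have "trm C = trm T" .
  moreover have "trm C = complex_of_real (mat_trace X)"
    unfolding trm_def mat_trace_def C_def using X by auto
  moreover have "trm T = (\<Sum>i<n. T$$(i,i))" unfolding trm_def using T(1) by auto
  ultimately show ?thesis using T(1) ev unfolding C_def by auto
qed

lemma part1:
  fixes A B X :: "real mat"
  assumes "A \<in> carrier_mat n n" and "B \<in> carrier_mat n n" and "X \<in> carrier_mat n n"
    and "mat_le_entrywise n (1\<^sub>m n - X) (A * B - B * A)"
  shows "mat_trace X \<ge> real n"
proof -
  have le: "1 - X$$(i,i) \<le> (A*B)$$(i,i) - (B*A)$$(i,i)" if "i < n" for i
  proof -
    have "(1\<^sub>m n - X)$$(i,i) \<le> (A*B - B*A)$$(i,i)" using assms(4) that unfolding mat_le_entrywise_def by blast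
    thus ?thesis using assms(1-3) that by simp
  qed
  have "(\<Sum>i<n. 1 - X$$(i,i)) \<le> (\<Sum>i<n. (A*B)$$(i,i) - (B*A)$$(i,i))"
    by (rule sum_mono, rule le, auto)
  also have "\<dots> = trm (A*B) - trm (B*A)" unfolding trm_def using assms(1,2)
    by (simp add: sum_subtractf)
  also have "\<dots> = 0" using trm_comm[OF assms(1,2)] by simp
  finally have "real n - (\<Sum>i<n. X$$(i,i)) \<le> 0" by (simp add: sum_subtractf)
  thus ?thesis unfolding mat_trace_def using assms(3) by auto
qed

lemma exists_big_eig:
  fixes X :: "real mat"
  assumes X: "X \<in> carrier_mat n n" and tr: "mat_trace X \<ge> real n" and n: "n > 0"
  shows "\<exists>k. eigenvalue (map_mat complex_of_real X) k \<and> Re k \<ge> 1"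
proof -
  obtain T where T: "T \<in> carrier_mat n n"
     "\<And>k. eigenvalue (map_mat complex_of_real X) k \<longleftrightarrow> (\<exists>i<n. T$$(i,i) = k)"
     "(\<Sum>i<n. T$$(i,i)) = complex_of_real (mat_trace X)"
    using eig_info[OF X] by blast
  have "(\<Sum>i<n. Re (T$$(i,i))) = mat_trace X" using arg_cong[OF T(3), of Re] by (simp add: Re_sum)
  hence s: "(\<Sum>i<n. Re (T$$(i,i))) \<ge> (\<Sum>i<n. 1)" using tr by simp
  have "\<exists>i<n. Re (T$$(i,i)) \<ge> 1"
  proof (rule ccontr)
    assume "\<not> ?thesis"
    hence "(\<Sum>i<n. Re (T$$(i,i))) < (\<Sum>i<n. 1)"
      using n by (intro sum_strict_mono) auto
    thus False using s by simp
  qed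
  thus ?thesis using T(2) by blast
qed

lemma part2:
  fixes X :: "real mat"
  assumes X: "X \<in> carrier_mat n n" and tr: "mat_trace X \<ge> real n" and n: "n > 0"
  shows "real_spectral_radius X \<ge> 1"
proof -
  obtain k where k: "eigenvalue (map_mat complex_of_real X) k" "Re k \<ge> 1"
    using exists_big_eig[OF assms] by blast
  have C: "map_mat complex_of_real X \<in> carrier_mat n n" using X by auto
  have "cmod k \<le> spectral_radius (map_mat complex_of_real X)"
    by (rule spectral_radius_mem_max(2)[OF C n], auto simp: spectrum_def k)
  moreover have "1 \<le> cmod k" using k(2) complex_Re_le_cmod order_trans by blast
  ultimately show ?thesis unfolding real_spectral_radius_def by simp
qed

lemma eig_idem:
  fixes C :: "complex mat"
  assumes C: "C \<in> carrier_mat n n" and idem: "C * C = C" and ev: "eigenvalue C k"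
  shows "k = 0 \<or> k = 1"
proof -
  obtain v where v: "v \<in> carrier_vec n" "v \<noteq> 0\<^sub>v n" "C *\<^sub>v v = k \<cdot>\<^sub>v v"
    using ev C unfolding eigenvalue_def eigenvector_def by auto
  have "C *\<^sub>v (C *\<^sub>v v) = (C * C) *\<^sub>v v" using C v by simp
  hence eq: "k \<cdot>\<^sub>v (k \<cdot>\<^sub>v v) = k \<cdot>\<^sub>v v" using v C idem by (simp add: mult_mat_vec)
  obtain i where i: "i < n" "v $ i \<noteq> 0"
  proof (rule ccontr)
    assume "\<not> thesis"
    hence "\<forall>i<n. v $ i = 0" using that by blast
    hence "v = 0\<^sub>v n" using v(1) by (intro eq_vecI) auto
    thus False using v(2) by simp
  qed
  have "(k \<cdot>\<^sub>v (k \<cdot>\<^sub>v v)) $ i = (k \<cdot>\<^sub>v v) $ i" using eq by simp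
  hence "k * (k * v $ i) = k * v $ i" using v(1) i(1) by simp
  hence "(k * k - k) * v $ i = 0" by (simp add: algebra_simps)
  hence "k * k - k = 0" using i(2) by simp
  hence "k * (k - 1) = 0" by (simp add: algebra_simps)
  thus ?thesis by simp
qed

lemma part3:
  fixes X :: "real mat"
  assumes X: "X \<in> carrier_mat n n" and tr: "mat_trace X \<ge> real n" and idem: "X * X = X"
  shows "X = 1\<^sub>m n"
proof -
  define C where "C = map_mat complex_of_real X"
  have C: "C \<in> carrier_mat n n" using X unfolding C_def by auto
  have Cidem: "C * C = C" unfolding C_def using of_real_hom.mat_hom_mult[OF X X] idem by metis
  obtain T where T: "T \<in> carrier_mat n n"
     "\<And>k. eigenvalue C k \<longleftrightarrow> (\<exists>i<n. T$$(i,i) = k)"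
     "(\<Sum>i<n. T$$(i,i)) = complex_of_real (mat_trace X)"
    using eig_info[OF X] unfolding C_def by blast
  have T01: "T$$(i,i) = 0 \<or> T$$(i,i) = 1" if "i < n" for i
    using eig_idem[OF C Cidem] T(2) that by blast
  have Tle: "Re (T$$(i,i)) \<le> 1" if "i < n" for i
    using T01[OF that] by auto
  have "(\<Sum>i<n. Re (T$$(i,i))) = mat_trace X" using arg_cong[OF T(3), of Re] by simp
  hence s: "(\<Sum>i<n. Re (T$$(i,i))) \<ge> (\<Sum>i<n. 1)" using tr by simp
  have all1: "T$$(i,i) = 1" if i: "i < n" for i
  proof (rule ccontr)
    assume "T$$(i,i) \<noteq> 1"
    hence "T$$(i,i) = 0" using T01 i by auto
    hence lt: "Re (T$$(i,i)) < 1" by simp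
    have "(\<Sum>i<n. Re (T$$(i,i))) < (\<Sum>i<n. 1)"
      by (rule sum_strict_mono_ex1) (use Tle lt i in auto)
    thus False using s by simp
  qed
  have no0: "\<not> eigenvalue C 0" using T(2) all1 by force
  show ?thesis
  proof (rule eq_matI)
    fix i j assume ij: "i < dim_row (1\<^sub>m n)" "j < dim_col (1\<^sub>m n)"
    hence ij': "i < n" "j < n" by auto
    define w :: "real vec" where "w = unit_vec n j"
    have w: "w \<in> carrier_vec n" unfolding w_def by auto
    define u where "u = X *\<^sub>v w - w"
    have u: "u \<in> carrier_vec n" unfolding u_def using X w by auto
    have "X *\<^sub>v u = X *\<^sub>v (X *\<^sub>v w) - X *\<^sub>v w" unfolding u_def using X w
      by (simp add: mult_minus_distrib_mat_vec)
    also have "X *\<^sub>v (X *\<^sub>v w) = (X * X) *\<^sub>v w" using X w by simp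
    also have "\<dots> = X *\<^sub>v w" using idem by simp
    finally have Xu: "X *\<^sub>v u = 0\<^sub>v n" using X w by simp
    have u0: "u = 0\<^sub>v n"
    proof (rule ccontr)
      assume nz: "u \<noteq> 0\<^sub>v n"
      have "C *\<^sub>v map_vec complex_of_real u = map_vec complex_of_real (X *\<^sub>v u)"
        unfolding C_def using of_real_hom.mult_mat_vec_hom[OF X u] by (rule sym)
      also have "\<dots> = 0\<^sub>v n" using Xu by auto
      finally have e1: "C *\<^sub>v map_vec complex_of_real u = 0 \<cdot>\<^sub>v map_vec complex_of_real u" using u by auto
      have e2: "map_vec complex_of_real u \<noteq> 0\<^sub>v n"
      proof
        assume "map_vec complex_of_real u = 0\<^sub>v n"
        hence "u = 0\<^sub>v n" using u by (intro eq_vecI) (auto dest!: arg_cong[of _ _ "\<lambda>v. v $ _"])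
        thus False using nz by simp
      qed
      have "eigenvalue C 0" unfolding eigenvalue_def eigenvector_def
        by (rule exI[of _ "map_vec complex_of_real u"]) (use C u e1 e2 in auto)
      thus False using no0 by simp
    qed
    have "u $ i = 0" using u0 ij' by simp
    hence "(X *\<^sub>v w) $ i = w $ i" unfolding u_def using X w ij' by simp
    thus "X $$ (i, j) = 1\<^sub>m n $$ (i, j)" using ij' X unfolding w_def
      by (simp add: scalar_prod_def unit_vec_def atLeast0LessThan mult.commute[of "X $$ _"] if_distrib[of "\<lambda>x. x * _"] cong: if_cong)
  qed (insert X, auto)
qed


lemma abs_div_le1: "\<bar>a\<bar> \<le> d \<Longrightarrow> 0 < d \<Longrightarrow> \<bar>a / d\<bar> \<le> (1::real)"
  by (simp add: abs_divide)

lemma comb_div: "(a/d)*x + (b/d)*y = (a*x + b*y)/(d::real)"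
  by (simp add: add_divide_distrib)

definition L1 :: "nat \<Rightarrow> real vec \<Rightarrow> real" where "L1 n v = (\<Sum>i<n. \<bar>v $ i\<bar>)"

definition trunc :: "nat \<Rightarrow> nat \<Rightarrow> real vec \<Rightarrow> real vec" where
  "trunc n k v = vec n (\<lambda>i. if i < k then v $ i else 0)"

context
  fixes n :: nat and N :: "real vec \<Rightarrow> real"
  assumes nrm: "is_norm_on n N"
begin

lemma N_nonneg: "v \<in> carrier_vec n \<Longrightarrow> N v \<ge> 0"
  using nrm unfolding is_norm_on_def by blast

lemma N_zero_iff: "v \<in> carrier_vec n \<Longrightarrow> N v = 0 \<longleftrightarrow> v = 0\<^sub>v n"
  using nrm unfolding is_norm_on_def by blast

lemma N_pos: "v \<in> carrier_vec n \<Longrightarrow> v \<noteq> 0\<^sub>v n \<Longrightarrow> N v > 0"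
  using N_nonneg N_zero_iff by force

lemma N_smult: "v \<in> carrier_vec n \<Longrightarrow> N (c \<cdot>\<^sub>v v) = \<bar>c\<bar> * N v"
  using nrm unfolding is_norm_on_def by blast

lemma N_tri: "u \<in> carrier_vec n \<Longrightarrow> v \<in> carrier_vec n \<Longrightarrow> N (u + v) \<le> N u + N v"
  using nrm unfolding is_norm_on_def by blast

lemma N_minus: assumes "u \<in> carrier_vec n" "v \<in> carrier_vec n" shows "N (u - v) \<le> N u + N v"
proof -
  have "u - v = u + (-1) \<cdot>\<^sub>v v" using assms by (intro eq_vecI) auto
  hence "N (u - v) \<le> N u + N ((-1) \<cdot>\<^sub>v v)" using N_tri assms by simp
  thus ?thesis using N_smult[OF assms(2)] by simp
qed

lemma N_comb: assumes "u \<in> carrier_vec n" "v \<in> carrier_vec n"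
  shows "N (a \<cdot>\<^sub>v u + b \<cdot>\<^sub>v v) \<le> \<bar>a\<bar> * N u + \<bar>b\<bar> * N v"
  using N_tri[of "a \<cdot>\<^sub>v u" "b \<cdot>\<^sub>v v"] N_smult assms by simp

lemma N_trunc: "k \<le> n \<Longrightarrow> N (trunc n k v) \<le> (\<Sum>i<k. \<bar>v $ i\<bar> * N (unit_vec n i))"
proof (induction k)
  case 0
  have "trunc n 0 v = 0\<^sub>v n" unfolding trunc_def by (intro eq_vecI) auto
  thus ?case using N_zero_iff[of "0\<^sub>v n"] by simp
next
  case (Suc k)
  have eq: "trunc n (Suc k) v = trunc n k v + (v $ k) \<cdot>\<^sub>v unit_vec n k"
    unfolding trunc_def using Suc.prems by (intro eq_vecI) (auto simp: less_Suc_eq)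
  have "N (trunc n (Suc k) v) \<le> N (trunc n k v) + N ((v $ k) \<cdot>\<^sub>v unit_vec n k)"
    unfolding eq by (rule N_tri) (auto simp: trunc_def)
  also have "\<dots> \<le> (\<Sum>i<k. \<bar>v $ i\<bar> * N (unit_vec n i)) + \<bar>v $ k\<bar> * N (unit_vec n k)"
    using Suc N_smult[of "unit_vec n k"] by simp
  finally show ?case by simp
qed

definition "Kc = (\<Sum>i<n. N (unit_vec n i))"

lemma N_upper: assumes v: "v \<in> carrier_vec n" shows "N v \<le> Kc * L1 n v"
proof -
  have "trunc n n v = v" unfolding trunc_def using v by (intro eq_vecI) auto
  hence "N v \<le> (\<Sum>i<n. \<bar>v $ i\<bar> * N (unit_vec n i))" using N_trunc[of n v] by simp
  also have "\<dots> \<le> (\<Sum>i<n. L1 n v * N (unit_vec n i))"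
  proof (rule sum_mono)
    fix i assume i: "i \<in> {..<n}"
    have "\<bar>v $ i\<bar> \<le> L1 n v" unfolding L1_def
      using i by (intro member_le_sum) auto
    thus "\<bar>v $ i\<bar> * N (unit_vec n i) \<le> L1 n v * N (unit_vec n i)"
      using N_nonneg[of "unit_vec n i"] by (intro mult_right_mono) auto
  qed
  also have "\<dots> = Kc * L1 n v" unfolding Kc_def by (simp add: sum_distrib_left mult.commute)
  finally show ?thesis .
qed


lemma L1_nonneg: "L1 m v \<ge> 0" unfolding L1_def by (intro sum_nonneg) auto

lemma L1_smult: "v \<in> carrier_vec n \<Longrightarrow> L1 n (c \<cdot>\<^sub>v v) = \<bar>c\<bar> * L1 n v"
  unfolding L1_def by (simp add: abs_mult sum_distrib_left)

lemma L1_coord: "i < n \<Longrightarrow> \<bar>v $ i\<bar> \<le> L1 n v"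
  unfolding L1_def by (intro member_le_sum) auto

lemma BW:
  fixes w :: "nat \<Rightarrow> real vec"
  assumes bnd: "\<And>m i. i < n \<Longrightarrow> \<bar>w m $ i\<bar> \<le> 1"
  shows "k \<le> n \<Longrightarrow> \<exists>r. strict_mono r \<and> (\<forall>i<k. convergent (\<lambda>m. w (r m) $ i))"
proof (induction k)
  case 0
  show ?case by (rule exI[of _ id]) (auto simp: strict_mono_def)
next
  case (Suc k)
  then obtain r where r: "strict_mono r" "\<forall>i<k. convergent (\<lambda>m. w (r m) $ i)" by auto
  obtain f where f: "strict_mono f" "monoseq (\<lambda>m. w (r (f m)) $ k)"
    using seq_monosub[of "\<lambda>m. w (r m) $ k"] by blast
  have "Bseq (\<lambda>m. w (r (f m)) $ k)" using bnd Suc.prems by (intro BseqI'[of _ 1]) auto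
  hence ck: "convergent (\<lambda>m. w (r (f m)) $ k)" using f(2) Bseq_monoseq_convergent by blast
  have "convergent (\<lambda>m. w (r (f m)) $ i)" if "i < Suc k" for i
  proof (cases "i < k")
    case True
    from convergent_subseq_convergent[OF r(2)[rule_format, OF True] f(1)]
    show ?thesis by (simp add: o_def)
  next
    case False
    hence "i = k" using that by simp
    thus ?thesis using ck by simp
  qed
  moreover have "strict_mono (r \<circ> f)" using r(1) f(1) by (rule strict_mono_o)
  ultimately show ?case by (intro exI[of _ "r \<circ> f"]) (auto simp: o_def)
qed

lemma N_lower: "\<exists>c>0. \<forall>v\<in>carrier_vec n. c * L1 n v \<le> N v"
proof (rule ccontr)
  assume "\<not> ?thesis"
  hence "\<forall>m. \<exists>v\<in>carrier_vec n. N v < inverse (real (Suc m)) * L1 n v"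
    by (metis inverse_positive_iff_positive not_less of_nat_0_less_iff zero_less_Suc)
  then obtain v where v: "\<And>m. v m \<in> carrier_vec n" "\<And>m. N (v m) < inverse (real (Suc m)) * L1 n (v m)"
    by metis
  have Lpos: "L1 n (v m) > 0" for m
  proof -
    have "0 \<le> N (v m)" using N_nonneg v(1) by blast
    hence "0 < inverse (real (Suc m)) * L1 n (v m)" using v(2)[of m] by linarith
    thus ?thesis using L1_nonneg[of n "v m"] by (simp add: zero_less_mult_iff)
  qed
  define w where "w m = inverse (L1 n (v m)) \<cdot>\<^sub>v v m" for m
  have w: "w m \<in> carrier_vec n" for m unfolding w_def using v(1) by simp
  have Lw: "L1 n (w m) = 1" for m unfolding w_def using L1_smult[OF v(1)] Lpos[of m]
    by simp
  have Nw: "N (w m) < inverse (real (Suc m))" for m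
  proof -
    have "N (w m) = inverse (L1 n (v m)) * N (v m)" unfolding w_def using N_smult[OF v(1)] Lpos[of m] by simp
    also have "\<dots> < inverse (L1 n (v m)) * (inverse (real (Suc m)) * L1 n (v m))"
      using v(2)[of m] Lpos[of m] by (intro mult_strict_left_mono) auto
    also have "\<dots> = inverse (real (Suc m))" using Lpos[of m] by simp
    finally show ?thesis .
  qed
  have bnd: "\<bar>w m $ i\<bar> \<le> 1" if "i < n" for m i using L1_coord[OF that, of "w m"] Lw by simp
  obtain r where r: "strict_mono r" "\<forall>i<n. convergent (\<lambda>m. w (r m) $ i)"
    using BW[of w n, OF bnd] by auto
  define u where "u = vec n (\<lambda>i. lim (\<lambda>m. w (r m) $ i))"
  have u: "u \<in> carrier_vec n" unfolding u_def by simp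
  have conv: "(\<lambda>m. w (r m) $ i) \<longlonglongrightarrow> u $ i" if "i < n" for i
    using r(2) that unfolding u_def by (simp add: convergent_LIMSEQ_iff)
  have "(\<lambda>m. L1 n (w (r m))) \<longlonglongrightarrow> L1 n u"
    unfolding L1_def by (intro tendsto_sum tendsto_rabs conv) auto
  hence Lu: "L1 n u = 1" using Lw by (simp add: LIMSEQ_const_iff)
  have d: "(\<lambda>m. L1 n (w (r m) - u)) \<longlonglongrightarrow> 0"
  proof -
    have "(\<lambda>m. \<Sum>i<n. \<bar>w (r m) $ i - u $ i\<bar>) \<longlonglongrightarrow> (\<Sum>i<n. \<bar>u $ i - u $ i\<bar>)"
      by (intro tendsto_sum tendsto_rabs tendsto_diff conv tendsto_const) auto
    moreover have "L1 n (w (r m) - u) = (\<Sum>i<n. \<bar>w (r m) $ i - u $ i\<bar>)" for m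
      unfolding L1_def using u w by (intro sum.cong) auto
    ultimately show ?thesis by simp
  qed
  have lim0: "(\<lambda>m. inverse (real (Suc m)) + Kc * L1 n (w (r m) - u)) \<longlonglongrightarrow> 0"
    using tendsto_add[OF LIMSEQ_inverse_real_of_nat tendsto_mult[OF tendsto_const d]] by simp
  have "N u \<le> 0"
  proof (rule LIMSEQ_le_const[OF lim0], intro exI allI impI)
    fix m
    have eq: "u = w (r m) - (w (r m) - u)" using u w by (intro eq_vecI) auto
    have "N u \<le> N (w (r m)) + N (w (r m) - u)" by (subst eq, rule N_minus) (use u w in auto)
    also have "N (w (r m)) \<le> inverse (real (Suc m))"
    proof -
      have "m \<le> r m" using seq_suble[OF r(1)] .
      hence iv: "inverse (real (Suc (r m))) \<le> inverse (real (Suc m))" by (simp add: le_imp_inverse_le)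
      show ?thesis using iv Nw[of "r m"] by linarith
    qed
    also have "N (w (r m) - u) \<le> Kc * L1 n (w (r m) - u)" by (rule N_upper) (use u w in auto)
    finally show "N u \<le> inverse (real (Suc m)) + Kc * L1 n (w (r m) - u)" by simp
  qed
  hence "N u = 0" using N_nonneg[OF u] by simp
  hence "u = 0\<^sub>v n" using N_zero_iff[OF u] by simp
  hence "L1 n u = 0" unfolding L1_def by simp
  thus False using Lu by simp
qed


lemma L1_mat:
  assumes X: "X \<in> carrier_mat n n" and v: "v \<in> carrier_vec n"
  shows "L1 n (X *\<^sub>v v) \<le> (\<Sum>i<n. \<Sum>j<n. \<bar>X $$ (i,j)\<bar>) * L1 n v"
proof -
  have "\<bar>(X *\<^sub>v v) $ i\<bar> \<le> (\<Sum>j<n. \<bar>X $$ (i,j)\<bar>) * L1 n v" if i: "i < n" for i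
  proof -
    have "(X *\<^sub>v v) $ i = (\<Sum>j<n. X $$ (i,j) * v $ j)"
      using X v i by (simp add: scalar_prod_def atLeast0LessThan)
    hence "\<bar>(X *\<^sub>v v) $ i\<bar> \<le> (\<Sum>j<n. \<bar>X $$ (i,j) * v $ j\<bar>)" by (simp add: sum_abs)
    also have "\<dots> \<le> (\<Sum>j<n. \<bar>X $$ (i,j)\<bar> * L1 n v)"
      by (intro sum_mono) (auto simp: abs_mult intro: mult_left_mono L1_coord)
    finally show ?thesis by (simp add: sum_distrib_right)
  qed
  hence "L1 n (X *\<^sub>v v) \<le> (\<Sum>i<n. (\<Sum>j<n. \<bar>X $$ (i,j)\<bar>) * L1 n v)"
    unfolding L1_def by (intro sum_mono) auto
  thus ?thesis by (simp add: sum_distrib_right)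
qed

lemma op_bdd: assumes X: "X \<in> carrier_mat n n"
  shows "bdd_above ((\<lambda>v. N (X *\<^sub>v v) / N v) ` {v \<in> carrier_vec n. v \<noteq> 0\<^sub>v n})"
proof -
  obtain c where c: "c > 0" "\<And>v. v \<in> carrier_vec n \<Longrightarrow> c * L1 n v \<le> N v" using N_lower by blast
  define M where "M = (\<Sum>i<n. \<Sum>j<n. \<bar>X $$ (i,j)\<bar>)"
  have M: "M \<ge> 0" unfolding M_def by (intro sum_nonneg) auto
  have Kc: "Kc \<ge> 0" unfolding Kc_def by (intro sum_nonneg N_nonneg) auto
  show ?thesis
  proof (rule bdd_aboveI2)
    fix v :: "real vec" assume "v \<in> {v \<in> carrier_vec n. v \<noteq> 0\<^sub>v n}"
    hence v: "v \<in> carrier_vec n" "v \<noteq> 0\<^sub>v n" by auto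
    have Np: "N v > 0" using N_pos v by blast
    have "N (X *\<^sub>v v) \<le> Kc * L1 n (X *\<^sub>v v)" using N_upper X v by simp
    also have "\<dots> \<le> Kc * (M * L1 n v)" using L1_mat[OF X v(1)] Kc unfolding M_def
      by (intro mult_left_mono) auto
    also have "\<dots> \<le> Kc * (M * (N v / c))"
    proof -
      have "L1 n v \<le> N v / c" using c(2)[OF v(1)] c(1) by (simp add: field_simps)
      thus ?thesis using Kc M by (intro mult_left_mono) auto
    qed
    finally have "N (X *\<^sub>v v) \<le> (Kc * M / c) * N v" by simp
    thus "N (X *\<^sub>v v) / N v \<le> Kc * M / c" using Np by (simp add: divide_le_eq)
  qed
qed

lemma op_bound: assumes X: "X \<in> carrier_mat n n" and v: "v \<in> carrier_vec n"
  shows "N (X *\<^sub>v v) \<le> induced_op_norm n N X * N v"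
proof (cases "v = 0\<^sub>v n")
  case True
  have "X *\<^sub>v v = 0\<^sub>v n" using True X by (intro eq_vecI) (auto simp: scalar_prod_def)
  thus ?thesis using True N_zero_iff[of "0\<^sub>v n"] by simp
next
  case False
  have Np: "N v > 0" using N_pos v False by blast
  have "N (X *\<^sub>v v) / N v \<le> induced_op_norm n N X"
    unfolding induced_op_norm_def by (rule cSUP_upper[OF _ op_bdd[OF X]]) (use v False in auto)
  thus ?thesis using Np by (simp add: divide_le_eq mult.commute)
qed


lemma part_norm:
  fixes X :: "real mat"
  assumes X: "X \<in> carrier_mat n n" and n: "n > 0"
    and ev: "eigenvalue (map_mat complex_of_real X) k" and k1: "cmod k \<ge> 1"
  shows "induced_op_norm n N X \<ge> 1"
proof (rule ccontr)
  assume neg: "\<not> induced_op_norm n N X \<ge> 1"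
  define s where "s = induced_op_norm n N X"
  have s1: "s < 1" using neg unfolding s_def by simp
  have s0: "s \<ge> 0"
  proof -
    define e :: "real vec" where "e = unit_vec n 0"
    have e: "e \<in> carrier_vec n" "e \<noteq> 0\<^sub>v n" unfolding e_def using n by auto
    have "N e > 0" using N_pos e by blast
    moreover have "0 \<le> s * N e"
    proof -
      have "0 \<le> N (X *\<^sub>v e)" by (rule N_nonneg) (use X e in auto)
      thus ?thesis using op_bound[OF X e(1)] unfolding s_def by linarith
    qed
    ultimately show ?thesis by (simp add: zero_le_mult_iff)
  qed
  define C where "C = map_mat complex_of_real X"
  have C: "C \<in> carrier_mat n n" using X unfolding C_def by auto
  obtain z where z: "z \<in> carrier_vec n" "z \<noteq> 0\<^sub>v n" "C *\<^sub>v z = k \<cdot>\<^sub>v z"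
    using ev C unfolding C_def[symmetric] eigenvalue_def eigenvector_def by auto
  have ReL: "X *\<^sub>v map_vec Re y = map_vec Re (C *\<^sub>v y)" if y: "y \<in> carrier_vec n" for y
    using X y C unfolding C_def by (intro eq_vecI) (auto simp: scalar_prod_def Re_sum)
  have ImL: "X *\<^sub>v map_vec Im y = map_vec Im (C *\<^sub>v y)" if y: "y \<in> carrier_vec n" for y
    using X y C unfolding C_def by (intro eq_vecI) (auto simp: scalar_prod_def Im_sum)
  define zk where "zk m = (k ^ m) \<cdot>\<^sub>v z" for m
  have zk: "zk m \<in> carrier_vec n" for m unfolding zk_def using z by simp
  have Czk: "C *\<^sub>v zk m = zk (Suc m)" for m
  proof -
    have "C *\<^sub>v zk m = (k ^ m) \<cdot>\<^sub>v (C *\<^sub>v z)" unfolding zk_def by (rule mult_mat_vec[OF C z(1)])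
    also have "\<dots> = zk (Suc m)" unfolding z(3) zk_def using z(1) by (intro eq_vecI) auto
    finally show ?thesis .
  qed
  define re where "re m = map_vec Re (zk m)" for m
  define im where "im m = map_vec Im (zk m)" for m
  have re: "re m \<in> carrier_vec n" and im: "im m \<in> carrier_vec n" for m
    unfolding re_def im_def using zk by auto
  have Xre: "X *\<^sub>v re m = re (Suc m)" for m unfolding re_def using ReL[OF zk] Czk by simp
  have Xim: "X *\<^sub>v im m = im (Suc m)" for m unfolding im_def using ImL[OF zk] Czk by simp
  define P where "P = N (re 0) + N (im 0)"
  have ind: "N (re m) + N (im m) \<le> s ^ m * P" for m
  proof (induction m)
    case 0 show ?case unfolding P_def by simp
  next
    case (Suc m)
    have "N (re (Suc m)) + N (im (Suc m)) \<le> s * N (re m) + s * N (im m)"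
      using op_bound[OF X re[of m]] op_bound[OF X im[of m]] Xre Xim unfolding s_def by simp
    also have "\<dots> = s * (N (re m) + N (im m))" by (simp add: algebra_simps)
    also have "\<dots> \<le> s * (s ^ m * P)" using Suc s0 by (intro mult_left_mono)
    finally show ?case by simp
  qed
  have low: "P \<le> 2 * (N (re m) + N (im m))" for m
  proof -
    define w where "w = k ^ m"
    define \<rho> where "\<rho> = cmod w"
    have r1: "\<rho> \<ge> 1" unfolding \<rho>_def w_def using k1 by (simp add: norm_power one_le_power)
    have r2: "\<rho>^2 = (Re w)^2 + (Im w)^2" unfolding \<rho>_def by (simp add: cmod_power2)
    have rp: "\<rho>^2 > 0" using r1 by simp
    have key1: "Re w * Re (w * c) + Im w * Im (w * c) = \<rho>^2 * Re c" for c
      unfolding r2 by (simp add: algebra_simps power2_eq_square)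
    have key2: "- Im w * Re (w * c) + Re w * Im (w * c) = \<rho>^2 * Im c" for c
      unfolding r2 by (simp add: algebra_simps power2_eq_square)
    have e1: "re 0 = (Re w / \<rho>^2) \<cdot>\<^sub>v re m + (Im w / \<rho>^2) \<cdot>\<^sub>v im m"
    proof (rule eq_vecI)
      fix j assume "j < dim_vec ((Re w / \<rho>^2) \<cdot>\<^sub>v re m + (Im w / \<rho>^2) \<cdot>\<^sub>v im m)"
      hence j: "j < n" using carrier_vecD[OF re[of m]] carrier_vecD[OF im[of m]] by simp
      have "(Re w / \<rho>^2) * Re (w * z $ j) + (Im w / \<rho>^2) * Im (w * z $ j) = Re (z $ j)"
        unfolding comb_div key1[of "z $ j"] using rp by simp
      moreover have "re m $ j = Re (w * z $ j)" "im m $ j = Im (w * z $ j)" "re 0 $ j = Re (z $ j)" "im 0 $ j = Im (z $ j)"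
        using j z(1) unfolding re_def im_def zk_def w_def by simp_all
      moreover have "((Re w / \<rho>^2) \<cdot>\<^sub>v re m + (Im w / \<rho>^2) \<cdot>\<^sub>v im m) $ j = (Re w / \<rho>^2) * re m $ j + (Im w / \<rho>^2) * im m $ j"
        using j re[of m] im[of m] by simp
      ultimately show "re 0 $ j = ((Re w / \<rho>^2) \<cdot>\<^sub>v re m + (Im w / \<rho>^2) \<cdot>\<^sub>v im m) $ j" by simp
    qed (use carrier_vecD[OF re[of m]] carrier_vecD[OF im[of m]] carrier_vecD[OF re[of 0]] carrier_vecD[OF im[of 0]] in simp)
    have e2: "im 0 = (- Im w / \<rho>^2) \<cdot>\<^sub>v re m + (Re w / \<rho>^2) \<cdot>\<^sub>v im m"
    proof (rule eq_vecI)
      fix j assume "j < dim_vec ((- Im w / \<rho>^2) \<cdot>\<^sub>v re m + (Re w / \<rho>^2) \<cdot>\<^sub>v im m)"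
      hence j: "j < n" using carrier_vecD[OF re[of m]] carrier_vecD[OF im[of m]] by simp
      have "(- Im w / \<rho>^2) * Re (w * z $ j) + (Re w / \<rho>^2) * Im (w * z $ j) = Im (z $ j)"
        unfolding comb_div key2[of "z $ j"] using rp by simp
      moreover have "re m $ j = Re (w * z $ j)" "im m $ j = Im (w * z $ j)" "re 0 $ j = Re (z $ j)" "im 0 $ j = Im (z $ j)"
        using j z(1) unfolding re_def im_def zk_def w_def by simp_all
      moreover have "((- Im w / \<rho>^2) \<cdot>\<^sub>v re m + (Re w / \<rho>^2) \<cdot>\<^sub>v im m) $ j = (- Im w / \<rho>^2) * re m $ j + (Re w / \<rho>^2) * im m $ j"
        using j re[of m] im[of m] by simp
      ultimately show "im 0 $ j = ((- Im w / \<rho>^2) \<cdot>\<^sub>v re m + (Re w / \<rho>^2) \<cdot>\<^sub>v im m) $ j" by simp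
    qed (use carrier_vecD[OF re[of m]] carrier_vecD[OF im[of m]] carrier_vecD[OF re[of 0]] carrier_vecD[OF im[of 0]] in simp)
    have ab: "\<bar>Re w\<bar> \<le> \<rho>^2" "\<bar>Im w\<bar> \<le> \<rho>^2"
    proof -
      have "\<rho> \<le> \<rho>^2" using r1 by (simp add: power2_eq_square)
      moreover have "\<bar>Re w\<bar> \<le> \<rho>" "\<bar>Im w\<bar> \<le> \<rho>" unfolding \<rho>_def by (simp_all add: abs_Re_le_cmod abs_Im_le_cmod)
      ultimately show "\<bar>Re w\<bar> \<le> \<rho>^2" "\<bar>Im w\<bar> \<le> \<rho>^2" by linarith+
    qed
    have b1: "\<bar>Re w / \<rho>^2\<bar> \<le> 1" "\<bar>- Im w / \<rho>^2\<bar> \<le> 1" "\<bar>Im w / \<rho>^2\<bar> \<le> 1"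
      using abs_div_le1[OF ab(1) rp] abs_div_le1[OF ab(2) rp] by simp_all
    have nr: "N (re m) \<ge> 0" "N (im m) \<ge> 0" using N_nonneg re im by auto
    have "N (re 0) \<le> \<bar>Re w / \<rho>^2\<bar> * N (re m) + \<bar>Im w / \<rho>^2\<bar> * N (im m)"
      unfolding e1 by (rule N_comb[OF re im])
    also have "\<dots> \<le> 1 * N (re m) + 1 * N (im m)"
      by (rule add_mono[OF mult_right_mono[OF b1(1) nr(1)] mult_right_mono[OF b1(3) nr(2)]])
    finally have i1: "N (re 0) \<le> N (re m) + N (im m)" by simp
    have "N (im 0) \<le> \<bar>- Im w / \<rho>^2\<bar> * N (re m) + \<bar>Re w / \<rho>^2\<bar> * N (im m)"
      unfolding e2 by (rule N_comb[OF re im])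
    also have "\<dots> \<le> 1 * N (re m) + 1 * N (im m)"
      by (rule add_mono[OF mult_right_mono[OF b1(2) nr(1)] mult_right_mono[OF b1(1) nr(2)]])
    finally have i2: "N (im 0) \<le> N (re m) + N (im m)" by simp
    show ?thesis using i1 i2 unfolding P_def by simp
  qed
  have Ppos: "P > 0"
  proof -
    obtain j where j: "j < n" "z $ j \<noteq> 0"
    proof (rule ccontr)
      assume "\<not> thesis"
      hence "\<forall>j<n. z $ j = 0" using that by blast
      hence "z = 0\<^sub>v n" using z(1) by (intro eq_vecI) auto
      thus False using z(2) by simp
    qed
    have zk0: "zk 0 = z" unfolding zk_def using z(1) by (intro eq_vecI) auto
    have "re 0 \<noteq> 0\<^sub>v n \<or> im 0 \<noteq> 0\<^sub>v n"
    proof (rule ccontr)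
      assume "\<not> ?thesis"
      hence "re 0 $ j = 0" "im 0 $ j = 0" using j by auto
      hence "Re (z $ j) = 0" "Im (z $ j) = 0" unfolding re_def im_def zk0 using z(1) j by auto
      hence "z $ j = 0" by (simp add: complex_eq_iff)
      thus False using j(2) by simp
    qed
    moreover have "N (re 0) \<ge> 0" "N (im 0) \<ge> 0" using N_nonneg re im by auto
    ultimately show ?thesis unfolding P_def using N_pos[OF re[of 0]] N_pos[OF im[of 0]] by fastforce
  qed
  obtain m where m: "s ^ m < 1/2" using real_arch_pow_inv[of "1/2" s] s1 by auto
  have "P \<le> 2 * (s ^ m * P)" using low[of m] ind[of m] by simp
  also have "\<dots> < 2 * (1/2 * P)" using m Ppos by simp
  finally show False by simp
qed

end


theorem proposition4p4:
  fixes n :: nat and A B X :: "real mat"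
  assumes "n > 0"
    and "A \<in> carrier_mat n n" and "B \<in> carrier_mat n n" and "X \<in> carrier_mat n n"
    and "mat_le_entrywise n (1\<^sub>m n - X) (A * B - B * A)"
  shows "mat_trace X \<ge> real n
         \<and> real_spectral_radius X \<ge> 1
         \<and> (\<forall>N. is_norm_on n N \<longrightarrow> induced_op_norm n N X \<ge> 1)
         \<and> (X * X = X \<longrightarrow> X = 1\<^sub>m n)"
proof -
  have t: "mat_trace X \<ge> real n" by (rule part1[OF assms(2-5)])
  obtain k where k: "eigenvalue (map_mat complex_of_real X) k" "Re k \<ge> 1"
    using exists_big_eig[OF assms(4) t assms(1)] by blast
  have k1: "cmod k \<ge> 1" using k(2) complex_Re_le_cmod order_trans by blast
  have "\<forall>N. is_norm_on n N \<longrightarrow> induced_op_norm n N X \<ge> 1"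
    using part_norm[OF _ assms(4) assms(1) k(1) k1] by blast
  thus ?thesis using t part2[OF assms(4) t assms(1)] part3[OF assms(4) t] by blast
qed

end
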